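(* Let $q\ge2$ and $n>h\ge1$. For all integers $r\in\{0,1,\dots,h\}$ and $l\in\{r,\dots,q\}$, $$M_q(n,h)\le\frac{\binom{n+h-2r+q-1}{q-1}}{\binom lr\binom{q-1+h-2r}{h-r}}+\sum_{i=1}^{l-1}\binom qi\binom{n-1}{i-1}$$ (the right-hand side being interpreted as $+\infty$ if the denominator vanishes). In particular, taking $r=0,l=1$, $M_q(n,h)\le\binom{n+h+q-1}{q-1}\big/\binom{q-1+h}{h}$.
   Context: $\triangle_n^{q-1}=\{\mathbf x\in\mathbb Z^q:x_i\ge0,\sum_ix_i=n\}$, $d_1(\mathbf x,\mathbf y)=\frac12\sum_i|x_i-y_i|$. $M_q(n,h)$ is the largest size of a subset of $\triangle_n^{q-1}$ with pairwise $d_1$-distances $>h$ (equivalently, the largest multiset code of length $n$ over a $q$-ary alphabet correcting $h$ deletions). Convention: $\binom ab=0$ for integers $a<b$ with $a\ge0$. *)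

theory Defs
  imports Complex_Main
begin

definition simplex :: "nat \<Rightarrow> nat \<Rightarrow> (nat \<Rightarrow> nat) set" where
  "simplex q n = {x. (\<forall>i\<ge>q. x i = 0) \<and> (\<Sum>i<q. x i) = n}"

definition d1 :: "nat \<Rightarrow> (nat \<Rightarrow> nat) \<Rightarrow> (nat \<Rightarrow> nat) \<Rightarrow> real" where
  "d1 q x y = (\<Sum>i<q. \<bar>real (x i) - real (y i)\<bar>) / 2"

definition M :: "nat \<Rightarrow> nat \<Rightarrow> nat \<Rightarrow> nat" where
  "M q n h = Max {card C | C. C \<subseteq> simplex q n \<and>
       (\<forall>x\<in>C. \<forall>y\<in>C. x \<noteq> y \<longrightarrow> d1 q x y > real h)}"

text \<open>Binomial with integer top entry; zero when the top entry is negative (then a < b).\<close>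
definition ibinom :: "int \<Rightarrow> int \<Rightarrow> nat" where
  "ibinom a b = (if a < 0 \<or> b < 0 then 0 else nat a choose nat b)"

end

theory Submission imports Defs "HOL-Library.Multiset" begin

definition sA :: "nat set \<Rightarrow> nat \<Rightarrow> (nat\<Rightarrow>nat) set" where
  "sA A m = {x. (\<forall>i. i \<notin> A \<longrightarrow> x i = 0) \<and> sum x A = m}"

lemma sA_eq_image:
  assumes "finite A"
  shows "sA A m = count ` multisets_of_size A m"
proof
  show "count ` multisets_of_size A m \<subseteq> sA A m"
  proof
    fix x assume "x \<in> count ` multisets_of_size A m"
    then obtain X where X: "set_mset X \<subseteq> A" "size X = m" "x = count X"
      by (auto simp: multisets_of_size_def)
    have "size X = sum (count X) (set_mset X)" by (simp add: size_multiset_overloaded_eq)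
    also have "\<dots> = sum (count X) A"
      by (rule sum.mono_neutral_left) (use assms X in \<open>auto simp: count_eq_zero_iff\<close>)
    finally show "x \<in> sA A m" using X by (auto simp: sA_def count_eq_zero_iff)
  qed
next
  show "sA A m \<subseteq> count ` multisets_of_size A m"
  proof
    fix x assume x: "x \<in> sA A m"
    have fin: "finite {i. x i > 0}"
      by (rule finite_subset[OF _ assms]) (use x in \<open>auto simp: sA_def\<close>)
    define X where "X = Abs_multiset x"
    have cX: "count X = x" using fin by (simp add: X_def count_Abs_multiset)
    have sX: "set_mset X \<subseteq> A"
    proof
      fix i assume "i \<in># X"
      then have "count X i > 0" by simp
      then have "x i \<noteq> 0" using cX by simp
      then show "i \<in> A" using x by (auto simp: sA_def)
    qed
    have "size X = sum (count X) (set_mset X)" by (simp add: size_multiset_overloaded_eq)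
    also have "\<dots> = sum (count X) A"
      by (rule sum.mono_neutral_left) (use assms sX in \<open>auto simp: count_eq_zero_iff\<close>)
    finally have "size X = m" using x cX by (simp add: sA_def)
    then show "x \<in> count ` multisets_of_size A m"
      using sX cX by (auto simp: multisets_of_size_def intro!: image_eqI[of _ _ X])
  qed
qed

lemma card_sA:
  assumes "finite A"
  shows "card (sA A m) = (card A + m - 1) choose m"
proof -
  have "inj_on count (multisets_of_size A m)"
    by (auto simp: inj_on_def multiset_eq_iff)
  then have "card (sA A m) = card (multisets_of_size A m)"
    by (simp add: sA_eq_image[OF assms] card_image)
  then show ?thesis using card_multisets_of_size[OF assms] by simp
qed

lemma finite_sA: "finite A \<Longrightarrow> finite (sA A m)"
  by (simp add: sA_eq_image finite_multisets_of_size)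


definition supp :: "nat \<Rightarrow> (nat \<Rightarrow> nat) \<Rightarrow> nat set" where
  "supp q x = {i. i < q \<and> 0 < x i}"

lemma simplex_sA: "simplex q m = sA {..<q} m"
  by (auto simp: simplex_def sA_def)

lemma sum_b_full:
  assumes "b \<in> sA B m" "B \<subseteq> {..<q}"
  shows "sum b {..<q} = m"
proof -
  have "sum b {..<q} = sum b B"
    by (rule sum.mono_neutral_right) (use assms in \<open>auto simp: sA_def\<close>)
  then show ?thesis using assms by (simp add: sA_def)
qed

lemma sum_ind:
  fixes q :: nat and S :: "nat set"
  assumes "S \<subseteq> {..<q}"
  shows "(\<Sum>i<q. (if i \<in> S then 1 else 0 :: real)) = real (card S)"
proof -
  have "(\<Sum>i<q. (if i \<in> S then 1 else 0 :: real)) = (\<Sum>i\<in>{..<q} \<inter> S. 1)"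
    by (subst sum.inter_restrict) auto
  also have "{..<q} \<inter> S = S" using assms by auto
  finally show ?thesis by simp
qed

lemma d1_le:
  assumes eq: "\<And>i. x i - (if i \<in> S then 1 else 0) + b i = x' i - (if i \<in> S' then 1 else 0) + b' i"
    and S: "S \<subseteq> supp q x" "S' \<subseteq> supp q x'" "card S = r" "card S' = r"
    and b: "b \<in> sA ({..<q} - S) (h - r)" "b' \<in> sA ({..<q} - S') (h - r)"
    and rh: "r \<le> h"
  shows "d1 q x x' \<le> real h"
proof -
  have Sq: "S \<subseteq> {..<q}" "S' \<subseteq> {..<q}" using S by (auto simp: supp_def)
  have pt: "\<bar>real (x i) - real (x' i)\<bar> \<le> (if i \<in> S then 1 else 0) + (if i \<in> S' then 1 else 0)
      + real (b i) + real (b' i)" for i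
  proof -
    have e: "real (x i - (if i \<in> S then 1 else 0) + b i) = real (x' i - (if i \<in> S' then 1 else 0) + b' i)"
      using eq[of i] by simp
    have "i \<in> S \<Longrightarrow> 1 \<le> x i" "i \<in> S' \<Longrightarrow> 1 \<le> x' i" using S by (auto simp: supp_def)
    then show ?thesis using e by (auto split: if_splits simp: of_nat_diff)
  qed
  have "(\<Sum>i<q. \<bar>real (x i) - real (x' i)\<bar>) \<le> (\<Sum>i<q. (if i \<in> S then 1 else 0) + (if i \<in> S' then 1 else 0)
      + real (b i) + real (b' i))"
    by (rule sum_mono) (rule pt)
  also have "\<dots> = (\<Sum>i<q. (if i \<in> S then 1 else 0 :: real)) + (\<Sum>i<q. (if i \<in> S' then 1 else 0 :: real))
      + real (sum b {..<q}) + real (sum b' {..<q})"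
    by (simp add: sum.distrib)
  also have "\<dots> = 2 * real h"
    using sum_ind[OF Sq(1)] sum_ind[OF Sq(2)] sum_b_full[OF b(1)] sum_b_full[OF b(2)] S rh
    by (simp add: of_nat_diff)
  finally show ?thesis by (simp add: d1_def)
qed

lemma packing:
  assumes "finite C" "finite U" "\<And>x. x \<in> C \<Longrightarrow> T x \<subseteq> U"
    "\<And>x y. x \<in> C \<Longrightarrow> y \<in> C \<Longrightarrow> x \<noteq> y \<Longrightarrow> T x \<inter> T y = {}"
    "\<And>x. x \<in> C \<Longrightarrow> k \<le> card (T x)"
  shows "card C * k \<le> card U"
proof -
  have fin: "\<And>x. x \<in> C \<Longrightarrow> finite (T x)" using assms(2,3) finite_subset by blast
  have "card C * k = (\<Sum>x\<in>C. k)" by simp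
  also have "\<dots> \<le> (\<Sum>x\<in>C. card (T x))" by (rule sum_mono) (rule assms(5))
  also have "\<dots> = card (\<Union>x\<in>C. T x)"
    by (rule card_UN_disjoint[symmetric]) (use assms fin in auto)
  also have "\<dots> \<le> card U"
    by (rule card_mono) (use assms in auto)
  finally show ?thesis .
qed


lemma key:
  assumes C: "C \<subseteq> simplex q n" and code: "\<forall>x\<in>C. \<forall>y\<in>C. x \<noteq> y \<longrightarrow> d1 q x y > real h"
    and rh: "r \<le> h" and nh: "h < n" and rl: "r \<le> l"
  shows "card {x\<in>C. l \<le> card (supp q x)} * ((l choose r) * ((q - r + (h - r) - 1) choose (h - r)))
           \<le> card (simplex q (n + h - 2 * r))"
proof -
  define C' where "C' = {x\<in>C. l \<le> card (supp q x)}"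
  have finS: "finite (simplex q m)" for m by (simp add: simplex_sA finite_sA)
  have finC': "finite C'" using C finS[of n] by (auto simp: C'_def intro: finite_subset)
  have "\<exists>P. P \<subseteq> supp q x \<and> card P = l" if "x \<in> C'" for x
    using that by (auto simp: C'_def supp_def intro: obtain_subset_with_card_n)
  then obtain P where P: "\<And>x. x \<in> C' \<Longrightarrow> P x \<subseteq> supp q x \<and> card (P x) = l" by metis
  define F where "F x = (\<lambda>(S, b). \<lambda>i. x i - (if i \<in> S then 1 else 0) + b i :: nat)" for x :: "nat \<Rightarrow> nat"
  define Sg where "Sg x = (SIGMA S:{S. S \<subseteq> P x \<and> card S = r}. sA ({..<q} - S) (h - r))" for x
  define T where "T x = F x ` Sg x" for x
  have finsupp: "finite (supp q x)" for x by (simp add: supp_def)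
  show ?thesis unfolding C'_def[symmetric]
  proof (rule packing[where T = T])
    show "finite C'" by fact
    show "finite (simplex q (n + h - 2 * r))" by (rule finS)
  next
    fix x assume x: "x \<in> C'"
    then have xs: "x \<in> simplex q n" using C by (auto simp: C'_def)
    have Px: "P x \<subseteq> supp q x" "card (P x) = l" using P[OF x] by auto
    have Pq: "P x \<subseteq> {..<q}" using Px by (auto simp: supp_def)
    show "T x \<subseteq> simplex q (n + h - 2 * r)"
    proof
      fix y assume "y \<in> T x"
      then obtain S b where Sb: "S \<subseteq> P x" "card S = r" "b \<in> sA ({..<q} - S) (h - r)" and y: "y = F x (S, b)"
        by (auto simp: T_def Sg_def)
      have Sq: "S \<subseteq> {..<q}" using Sb Pq by auto
      have x1: "i \<in> S \<Longrightarrow> 1 \<le> x i" for i using Sb Px by (auto simp: supp_def)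
      have "y i = 0" if "\<not> i < q" for i
        using that xs Sb Sq by (auto simp: y F_def simplex_def sA_def)
      moreover have "sum y {..<q} = n + h - 2 * r"
      proof -
        have "real (sum y {..<q}) = (\<Sum>i<q. real (x i) - (if i \<in> S then 1 else 0) + real (b i))"
        proof -
          have "real (y i) = real (x i) - (if i \<in> S then 1 else 0) + real (b i)" for i
            using x1[of i] by (cases "i \<in> S") (auto simp: y F_def of_nat_diff)
          then show ?thesis unfolding of_nat_sum by simp
        qed
        also have "\<dots> = real (sum x {..<q}) - (\<Sum>i<q. (if i \<in> S then 1 else 0 :: real)) + real (sum b {..<q})"
          by (simp add: sum.distrib sum_subtractf)
        also have "\<dots> = real n - real r + real (h - r)"
          using sum_ind[OF Sq] sum_b_full[OF Sb(3)] xs Sb by (auto simp: simplex_def)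
        also have "\<dots> = real (n + h - 2 * r)" using rh nh by (simp add: of_nat_diff)
        finally show ?thesis by linarith
      qed
      ultimately show "y \<in> simplex q (n + h - 2 * r)" by (auto simp: simplex_def)
    qed
    have inj: "inj_on (F x) (Sg x)"
    proof (rule inj_onI)
      fix u v assume u: "u \<in> Sg x" and v: "v \<in> Sg x" and e: "F x u = F x v"
      obtain S b where uu: "u = (S, b)" by (cases u)
      obtain S' b' where vv: "v = (S', b')" by (cases v)
      have Sb: "S \<subseteq> P x" "b \<in> sA ({..<q} - S) (h - r)" using u uu by (auto simp: Sg_def)
      have Sb': "S' \<subseteq> P x" "b' \<in> sA ({..<q} - S') (h - r)" using v vv by (auto simp: Sg_def)
      have ei: "x i - (if i \<in> S then 1 else 0) + b i = x i - (if i \<in> S' then 1 else 0) + b' i" for i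
        using fun_cong[OF e, of i] by (simp add: uu vv F_def)
      have x1: "i \<in> P x \<Longrightarrow> 1 \<le> x i" for i using Px by (auto simp: supp_def)
      have b0: "i \<in> S \<Longrightarrow> b i = 0" "i \<in> S' \<Longrightarrow> b' i = 0" for i
        using Sb(2) Sb'(2) by (auto simp: sA_def)
      have SS: "S = S'"
      proof (rule set_eqI)
        fix i show "i \<in> S \<longleftrightarrow> i \<in> S'"
          using ei[of i] b0[of i] x1[of i] Sb(1) Sb'(1) by (auto split: if_splits)
      qed
      have "b = b'" using ei by (auto simp: SS)
      then show "u = v" using SS uu vv by simp
    qed
    have finP: "finite (P x)" using Px finsupp finite_subset by blast
    have finSS: "finite {S. S \<subseteq> P x \<and> card S = r}"
      by (rule finite_subset[of _ "Pow (P x)"]) (use finP in auto)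
    have "card (T x) = card (Sg x)" unfolding T_def using inj by (rule card_image)
    also have "\<dots> = (\<Sum>S\<in>{S. S \<subseteq> P x \<and> card S = r}. card (sA ({..<q} - S) (h - r)))"
      unfolding Sg_def
      by (rule card_SigmaI) (use finSS in \<open>auto intro: finite_sA\<close>)
    also have "\<dots> = (\<Sum>S\<in>{S. S \<subseteq> P x \<and> card S = r}. (q - r + (h - r) - 1) choose (h - r))"
    proof (rule sum.cong[OF refl])
      fix S assume "S \<in> {S. S \<subseteq> P x \<and> card S = r}"
      then have "card ({..<q} - S) = q - r" using Pq
        by (subst card_Diff_subset) (auto intro: finite_subset)
      then show "card (sA ({..<q} - S) (h - r)) = (q - r + (h - r) - 1) choose (h - r)"
        by (simp add: card_sA)
    qed
    also have "\<dots> = (l choose r) * ((q - r + (h - r) - 1) choose (h - r))"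
      using n_subsets[of "P x" r] Px finP by simp
    finally show "(l choose r) * ((q - r + (h - r) - 1) choose (h - r)) \<le> card (T x)" by simp
  next
    fix x y assume x: "x \<in> C'" and y: "y \<in> C'" and xy: "x \<noteq> y"
    show "T x \<inter> T y = {}"
    proof (rule ccontr)
      assume "T x \<inter> T y \<noteq> {}"
      then obtain S b S' b' where Sb: "S \<subseteq> P x" "card S = r" "b \<in> sA ({..<q} - S) (h - r)"
        and Sb': "S' \<subseteq> P y" "card S' = r" "b' \<in> sA ({..<q} - S') (h - r)"
        and e: "F x (S, b) = F y (S', b')"
        by (auto simp: T_def Sg_def)
      have "d1 q x y \<le> real h"
        by (rule d1_le[OF _ _ _ Sb(2) Sb'(2) Sb(3) Sb'(3) rh])
          (use fun_cong[OF e] P[OF x] P[OF y] Sb Sb' in \<open>auto simp: F_def\<close>)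
      moreover have "d1 q x y > real h" using code x y xy by (auto simp: C'_def)
      ultimately show False by simp
    qed
  qed
qed


lemma fixed_supp:
  assumes S: "S \<subseteq> {..<q}" "card S = i" "1 \<le> i"
  shows "card {x \<in> simplex q n. supp q x = S} \<le> (n - 1) choose (i - 1)"
proof (cases "{x \<in> simplex q n. supp q x = S} = {}")
  case True then show ?thesis by (metis card.empty le0)
next
  case False
  define E where "E = {x \<in> simplex q n. supp q x = S}"
  have finS: "finite S" using S finite_subset by blast
  have sumS: "sum x S = n" if "x \<in> E" for x
  proof -
    have "sum x {..<q} = sum x S"
      by (rule sum.mono_neutral_right) (use that S in \<open>auto simp: E_def supp_def\<close>)
    then show ?thesis using that by (auto simp: E_def simplex_def)
  qed
  have pos: "j \<in> S \<Longrightarrow> 1 \<le> x j" if "x \<in> E" for x j using that by (auto simp: E_def supp_def)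
  from False obtain x0 where x0: "x0 \<in> E" by (auto simp: E_def)
  have "sum (\<lambda>_. 1::nat) S \<le> sum x0 S" by (rule sum_mono) (rule pos[OF x0])
  then have iN: "i \<le> n" using sumS[OF x0] S by simp
  define g where "g x = (\<lambda>j. x j - (if j \<in> S then 1 else 0))" for x :: "nat \<Rightarrow> nat"
  have "g ` E \<subseteq> sA S (n - i)"
  proof
    fix y assume "y \<in> g ` E"
    then obtain x where x: "x \<in> E" and y: "y = g x" by auto
    have z: "j \<notin> S \<Longrightarrow> y j = 0" for j
      using x by (cases "j < q") (auto simp: y g_def E_def supp_def simplex_def)
    have "sum y S = sum x S - sum (\<lambda>_. 1) S"
      unfolding y g_def using pos[OF x] by (simp add: sum_subtractf_nat)
    then have "sum y S = n - i" using sumS[OF x] S by simp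
    then show "y \<in> sA S (n - i)" using z by (auto simp: sA_def)
  qed
  moreover have "inj_on g E"
  proof (rule inj_onI)
    fix x y assume x: "x \<in> E" and y: "y \<in> E" and e: "g x = g y"
    show "x = y"
    proof
      fix j show "x j = y j"
        using fun_cong[OF e, of j] pos[OF x, of j] pos[OF y, of j] by (auto simp: g_def split: if_splits)
    qed
  qed
  ultimately have "card E \<le> card (sA S (n - i))"
    using card_inj_on_le finite_sA finS by blast
  also have "\<dots> = (i + (n - i) - 1) choose (n - i)" using card_sA[OF finS] S by simp
  also have "\<dots> = (n - 1) choose (n - i)" using iN by simp
  also have "\<dots> = (n - 1) choose (i - 1)"
    using binomial_symmetric[of "i - 1" "n - 1"] iN S by simp
  finally show ?thesis by (simp add: E_def)
qed

lemma small:
  assumes "n \<ge> 1"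
  shows "card {x \<in> simplex q n. card (supp q x) < l} \<le> (\<Sum>i=1..<l. (q choose i) * ((n - 1) choose (i - 1)))"
proof -
  define E where "E S = {x \<in> simplex q n. supp q x = S}" for S
  define Ss where "Ss i = {S. S \<subseteq> {..<q} \<and> card S = i}" for i
  have finSs: "finite (Ss i)" for i
    by (rule finite_subset[of _ "Pow {..<q}"]) (auto simp: Ss_def)
  have sub: "{x \<in> simplex q n. card (supp q x) < l} \<subseteq> (\<Union>i\<in>{1..<l}. \<Union>S\<in>Ss i. E S)"
  proof
    fix x assume x: "x \<in> {x \<in> simplex q n. card (supp q x) < l}"
    have "supp q x \<noteq> {}"
    proof
      assume "supp q x = {}"
      then have "\<forall>j<q. x j = 0" by (auto simp: supp_def)
      then have "sum x {..<q} = 0" by simp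
      then show False using x assms by (auto simp: simplex_def)
    qed
    then have "card (supp q x) \<ge> 1"
      by (simp add: supp_def Suc_le_eq card_gt_0_iff)
    then show "x \<in> (\<Union>i\<in>{1..<l}. \<Union>S\<in>Ss i. E S)"
      using x by (auto simp: E_def Ss_def supp_def)
  qed
  have "card {x \<in> simplex q n. card (supp q x) < l} \<le> card (\<Union>i\<in>{1..<l}. \<Union>S\<in>Ss i. E S)"
  proof (rule card_mono[OF _ sub])
    have "finite (simplex q n)" by (simp add: simplex_sA finite_sA)
    then show "finite (\<Union>i\<in>{1..<l}. \<Union>S\<in>Ss i. E S)"
      by (rule finite_subset[rotated]) (auto simp: E_def)
  qed
  also have "\<dots> \<le> (\<Sum>i\<in>{1..<l}. card (\<Union>S\<in>Ss i. E S))" by (rule card_UN_le) simp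
  also have "\<dots> \<le> (\<Sum>i\<in>{1..<l}. \<Sum>S\<in>Ss i. card (E S))"
    by (rule sum_mono) (rule card_UN_le[OF finSs])
  also have "\<dots> \<le> (\<Sum>i\<in>{1..<l}. \<Sum>S\<in>Ss i. (n - 1) choose (i - 1))"
  proof (intro sum_mono)
    fix i S assume "i \<in> {1..<l}" "S \<in> Ss i"
    then show "card (E S) \<le> (n - 1) choose (i - 1)"
      unfolding E_def using fixed_supp[of S q i n] by (auto simp: Ss_def)
  qed
  also have "\<dots> = (\<Sum>i=1..<l. (q choose i) * ((n - 1) choose (i - 1)))"
    by (rule sum.cong) (auto simp: Ss_def n_subsets)
  finally show ?thesis .
qed


lemma M_attained:
  obtains C where "C \<subseteq> simplex q n" "\<forall>x\<in>C. \<forall>y\<in>C. x \<noteq> y \<longrightarrow> d1 q x y > real h"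
    "card C = M q n h"
proof -
  define K where "K = {card C | C. C \<subseteq> simplex q n \<and>
       (\<forall>x\<in>C. \<forall>y\<in>C. x \<noteq> y \<longrightarrow> d1 q x y > real h)}"
  have "K \<subseteq> card ` Pow (simplex q n)" by (auto simp: K_def)
  moreover have "finite (simplex q n)" by (simp add: simplex_sA finite_sA)
  ultimately have fK: "finite K" by (meson finite_Pow_iff finite_imageI finite_subset)
  have "0 \<in> K" unfolding K_def by (auto intro!: exI[of _ "{}"])
  then have "Max K \<in> K" using fK Max_in by blast
  then show ?thesis using that by (auto simp: K_def M_def)
qed

lemma main_nat:
  assumes h1: "h \<ge> 1" and nh: "n > h" and rh: "r \<le> h" and rl: "r \<le> l"
    and Dpos: "(l choose r) * ((q - r + (h - r) - 1) choose (h - r)) > 0"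
  shows "real (M q n h) \<le> real ((q + (n + h - 2 * r) - 1) choose (n + h - 2 * r))
      / real ((l choose r) * ((q - r + (h - r) - 1) choose (h - r)))
      + (\<Sum>i=1..<l. real (q choose i) * real ((n - 1) choose (i - 1)))"
proof -
  define D where "D = (l choose r) * ((q - r + (h - r) - 1) choose (h - r))"
  obtain C where C: "C \<subseteq> simplex q n" and code: "\<forall>x\<in>C. \<forall>y\<in>C. x \<noteq> y \<longrightarrow> d1 q x y > real h"
    and cC: "card C = M q n h" by (rule M_attained)
  have fC: "finite C" using C by (rule finite_subset) (simp add: simplex_sA finite_sA)
  define C1 where "C1 = {x\<in>C. l \<le> card (supp q x)}"
  define C2 where "C2 = {x\<in>C. card (supp q x) < l}"
  have "C = C1 \<union> C2" "C1 \<inter> C2 = {}" by (auto simp: C1_def C2_def)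
  then have cs: "card C = card C1 + card C2" using fC
    by (metis card_Un_disjoint finite_Un)
  have k: "card C1 * D \<le> card (simplex q (n + h - 2 * r))"
    unfolding C1_def D_def by (rule key[OF C code rh nh rl])
  have cS: "card (simplex q (n + h - 2 * r)) = (q + (n + h - 2 * r) - 1) choose (n + h - 2 * r)"
    by (simp add: simplex_sA card_sA)
  have "C2 \<subseteq> {x \<in> simplex q n. card (supp q x) < l}" using C by (auto simp: C2_def)
  then have "card C2 \<le> card {x \<in> simplex q n. card (supp q x) < l}"
    by (rule card_mono[rotated]) (simp add: simplex_sA finite_sA)
  also have "\<dots> \<le> (\<Sum>i=1..<l. (q choose i) * ((n - 1) choose (i - 1)))"
    by (rule small) (use nh in simp)
  finally have c2: "real (card C2) \<le> (\<Sum>i=1..<l. real (q choose i) * real ((n - 1) choose (i - 1)))"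
    by (metis (no_types, lifting) of_nat_le_iff of_nat_mult of_nat_sum sum.cong)
  have Dp: "real D > 0" using Dpos by (simp add: D_def)
  have "real (card C1) * real D \<le> real (card (simplex q (n + h - 2 * r)))"
    using k by (metis of_nat_le_iff of_nat_mult)
  then have c1: "real (card C1) \<le> real ((q + (n + h - 2 * r) - 1) choose (n + h - 2 * r)) / real D"
    using Dp cS by (simp add: pos_le_divide_eq)
  show ?thesis using c1 c2 cs cC by (simp add: D_def)
qed

theorem mainTheorem18:
  fixes q n h r l :: nat
  assumes "q \<ge> 2" and "h \<ge> 1" and "n > h" and "r \<le> h" and "r \<le> l" and "l \<le> q"
  shows "(ibinom (int l) (int r) * ibinom (int q - 1 + int h - 2 * int r) (int h - int r) \<noteq> 0 \<longrightarrow>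
           real (M q n h) \<le>
             real (ibinom (int n + int h - 2 * int r + int q - 1) (int q - 1))
               / real (ibinom (int l) (int r) * ibinom (int q - 1 + int h - 2 * int r) (int h - int r))
             + (\<Sum>i=1..<l. real (q choose i) * real ((n - 1) choose (i - 1))))
       \<and> real (M q n h) \<le> real ((n + h + q - 1) choose (q - 1)) / real ((q - 1 + h) choose h)"
proof
  show "ibinom (int l) (int r) * ibinom (int q - 1 + int h - 2 * int r) (int h - int r) \<noteq> 0 \<longrightarrow>
           real (M q n h) \<le>
             real (ibinom (int n + int h - 2 * int r + int q - 1) (int q - 1))
               / real (ibinom (int l) (int r) * ibinom (int q - 1 + int h - 2 * int r) (int h - int r))
             + (\<Sum>i=1..<l. real (q choose i) * real ((n - 1) choose (i - 1)))"
  proof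
    assume nz: "ibinom (int l) (int r) * ibinom (int q - 1 + int h - 2 * int r) (int h - int r) \<noteq> 0"
    have b1: "ibinom (int l) (int r) = l choose r" by (simp add: ibinom_def)
    have ge: "int q - 1 + int h - 2 * int r \<ge> 0"
      using nz by (auto simp: ibinom_def split: if_splits)
    have "nat (int q - 1 + int h - 2 * int r) = q - r + (h - r) - 1" using ge assms by linarith
    moreover have "nat (int h - int r) = h - r" using assms by linarith
    ultimately have b2: "ibinom (int q - 1 + int h - 2 * int r) (int h - int r) = (q - r + (h - r) - 1) choose (h - r)"
      using ge assms by (simp add: ibinom_def)
    have "nat (int n + int h - 2 * int r + int q - 1) = n + h - 2 * r + q - 1" using assms by linarith
    moreover have "nat (int q - 1) = q - 1" using assms by linarith
    ultimately have b3: "ibinom (int n + int h - 2 * int r + int q - 1) (int q - 1) = (n + h - 2 * r + q - 1) choose (q - 1)"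
      using assms by (simp add: ibinom_def)
    have b4: "(q + (n + h - 2 * r) - 1) choose (n + h - 2 * r) = (n + h - 2 * r + q - 1) choose (q - 1)"
    proof -
      have "(q + (n + h - 2 * r) - 1) choose (n + h - 2 * r)
          = (q + (n + h - 2 * r) - 1) choose ((q + (n + h - 2 * r) - 1) - (n + h - 2 * r))"
        by (rule binomial_symmetric) (use assms in linarith)
      also have "(q + (n + h - 2 * r) - 1) - (n + h - 2 * r) = q - 1" using assms by linarith
      finally have A: "(q + (n + h - 2 * r) - 1) choose (n + h - 2 * r) = (q + (n + h - 2 * r) - 1) choose (q - 1)" .
      have e: "q + (n + h - 2 * r) - 1 = n + h - 2 * r + q - 1" by linarith
      show ?thesis using A by (simp only: e)
    qed
    have "(l choose r) * ((q - r + (h - r) - 1) choose (h - r)) > 0" using nz b1 b2 by simp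
    from main_nat[OF assms(2,3,4,5) this] show "real (M q n h) \<le>
             real (ibinom (int n + int h - 2 * int r + int q - 1) (int q - 1))
               / real (ibinom (int l) (int r) * ibinom (int q - 1 + int h - 2 * int r) (int h - int r))
             + (\<Sum>i=1..<l. real (q choose i) * real ((n - 1) choose (i - 1)))"
      unfolding b1 b2 b3 b4 .
  qed
next
  have "((0::nat) choose 0) * ((q - 0 + (h - 0) - 1) choose (h - 0)) > 0"
    using assms by simp
  from main_nat[OF assms(2,3) _ _ this] have
    "real (M q n h) \<le> real ((q + (n + h) - 1) choose (n + h)) / real ((q + h - 1) choose h)" by simp
  also have "(q + (n + h) - 1) choose (n + h) = (n + h + q - 1) choose (q - 1)"
  proof -
    have "(q + (n + h) - 1) choose (n + h) = (q + (n + h) - 1) choose ((q + (n + h) - 1) - (n + h))"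
      by (rule binomial_symmetric) (use assms in linarith)
    also have "(q + (n + h) - 1) - (n + h) = q - 1" using assms by linarith
    finally have A: "(q + (n + h) - 1) choose (n + h) = (q + (n + h) - 1) choose (q - 1)" .
    have e: "q + (n + h) - 1 = n + h + q - 1" by linarith
    show ?thesis using A by (simp only: e)
  qed
  also have "q + h - 1 = q - 1 + h" using assms by linarith
  finally show "real (M q n h) \<le> real ((n + h + q - 1) choose (q - 1)) / real ((q - 1 + h) choose h)" .
qed

end
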